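(* Let $K$ be a convex body in $\mathbb{R}^d$ with $o\in\mathrm{int}(K)$, let $\varepsilon\ge0$, and let $v_1+\lambda_1K$, $v_2+\lambda_2K$ be positive homothets of $K$ with $\lambda_1,\lambda_2\ge1$, $v_1\notin v_2+\lambda_2\,\mathrm{int}(K)$, $v_2\notin v_1+\lambda_1\,\mathrm{int}(K)$, and for $i=1,2$: $o\notin v_i+\lambda_i\,\mathrm{int}(K)$ and $(v_i+\lambda_iK)\cap(-\varepsilon K)\ne\emptyset$. Then \[\left\|\frac{-v_1}{\|-v_1\|_K}-\frac{-v_2}{\|-v_2\|_K}\right\|_{K\cap-K}\ge1-\varepsilon.\]
   Context: A convex body is a compact convex set with non-empty interior. For a convex body $L$ with $o\in\mathrm{int}(L)$, $\|x\|_L=\inf\{\mu>0:x\in\mu L\}$; in particular $\|x\|_{K\cap -K}=\max\{\|x\|_K,\|-x\|_K\}$. *)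

theory Defs
  imports "HOL-Analysis.Analysis"
begin

definition convex_body :: "'a::euclidean_space set \<Rightarrow> bool" where
  "convex_body K \<longleftrightarrow> compact K \<and> convex K \<and> interior K \<noteq> {}"

definition gauge_norm :: "'a::euclidean_space set \<Rightarrow> 'a \<Rightarrow> real" where
  "gauge_norm L x = Inf {\<mu>. \<mu> > 0 \<and> x \<in> (\<lambda>y. \<mu> *\<^sub>R y) ` L}"

definition homothet :: "'a::real_vector \<Rightarrow> real \<Rightarrow> 'a set \<Rightarrow> 'a set" where
  "homothet v c S = (\<lambda>x. v + c *\<^sub>R x) ` S"

end

theory Submission
  imports Defs
begin

lemma shrink_int:
  fixes K :: "'a::euclidean_space set"
  assumes "convex K" "0 \<in> interior K" "x \<in> K" "0 \<le> t" "t < 1"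
  shows "t *\<^sub>R x \<in> interior K"
proof -
  have "x - (1 - t) *\<^sub>R (x - 0) \<in> interior K"
    by (rule mem_interior_convex_shrink[OF assms(1,2,3)]) (use assms in auto)
  moreover have "x - (1 - t) *\<^sub>R (x - 0) = t *\<^sub>R x" by (simp add: algebra_simps)
  ultimately show ?thesis by simp
qed

lemma in_hom_int:
  fixes K :: "'a::euclidean_space set"
  assumes "convex K" "0 \<in> interior K" "k \<in> K" "0 \<le> c" "c < l"
  shows "u + c *\<^sub>R k \<in> homothet u l (interior K)"
proof -
  have l: "l > 0" using assms by auto
  have "(c / l) *\<^sub>R k \<in> interior K"
    by (rule shrink_int) (use assms l in auto)
  moreover have "u + c *\<^sub>R k = u + l *\<^sub>R ((c / l) *\<^sub>R k)" using l by simp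
  ultimately show ?thesis unfolding homothet_def by blast
qed

lemma conv0:
  fixes K :: "'a::euclidean_space set"
  assumes "convex K" "0 \<in> K" "k \<in> K" "0 \<le> t" "t \<le> 1"
  shows "t *\<^sub>R k \<in> K"
  using convexD[OF assms(1) assms(3) assms(2), of t "1 - t"] assms by simp

lemma gauge_nonempty:
  fixes L :: "'a::euclidean_space set"
  assumes "r > 0" "cball 0 r \<subseteq> L"
  shows "\<exists>\<mu>>0. x \<in> (\<lambda>y. \<mu> *\<^sub>R y) ` L"
proof (cases "x = 0")
  case True
  then show ?thesis using assms by (intro exI[of _ 1]) auto
next
  case False
  define y where "y = (r / norm x) *\<^sub>R x"
  have "y \<in> L" using assms False unfolding y_def by (intro subsetD[OF assms(2)]) auto
  moreover have "x = (norm x / r) *\<^sub>R y" using False assms unfolding y_def by simp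
  ultimately show ?thesis using False assms
    by (intro exI[of _ "norm x / r"]) auto
qed

lemma gauge_ge0:
  fixes L :: "'a::euclidean_space set"
  assumes "r > 0" "cball 0 r \<subseteq> L"
  shows "gauge_norm L x \<ge> 0"
  unfolding gauge_norm_def
  using gauge_nonempty[OF assms, of x] by (intro cInf_greatest) auto

lemma gauge_le:
  fixes L :: "'a::euclidean_space set"
  assumes "c > 0" "k \<in> L" "x = c *\<^sub>R k"
  shows "gauge_norm L x \<le> c"
  unfolding gauge_norm_def
proof (rule cInf_lower)
  show "c \<in> {\<mu>. \<mu> > 0 \<and> x \<in> (\<lambda>y. \<mu> *\<^sub>R y) ` L}" using assms by auto
  show "bdd_below {\<mu>. \<mu> > 0 \<and> x \<in> (\<lambda>y. \<mu> *\<^sub>R y) ` L}"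
    by (rule bdd_belowI[of _ 0]) auto
qed

lemma gauge_less:
  fixes L :: "'a::euclidean_space set"
  assumes "r > 0" "cball 0 r \<subseteq> L" "gauge_norm L x < z"
  obtains \<mu> k where "\<mu> > 0" "\<mu> < z" "k \<in> L" "x = \<mu> *\<^sub>R k"
proof -
  have "{\<mu>. \<mu> > 0 \<and> x \<in> (\<lambda>y. \<mu> *\<^sub>R y) ` L} \<noteq> {}"
    using gauge_nonempty[OF assms(1,2), of x] by auto
  from cInf_lessD[OF this] assms(3) obtain \<mu> where
    "\<mu> \<in> {\<mu>. \<mu> > 0 \<and> x \<in> (\<lambda>y. \<mu> *\<^sub>R y) ` L}" "\<mu> < z" unfolding gauge_norm_def by blast
  then show ?thesis using that by auto
qed


lemma gauge_point:
  fixes K :: "'a::euclidean_space set"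
  assumes "closed K" "convex K" "r > 0" "cball 0 r \<subseteq> K" "gauge_norm K x > 0"
  shows "(1 / gauge_norm K x) *\<^sub>R x \<in> K"
proof -
  define g where "g = gauge_norm K x"
  have g: "g > 0" using assms g_def by simp
  have z: "0 \<in> K" using assms by auto
  have big: "inverse \<mu> *\<^sub>R x \<in> K" if mg: "\<mu> > g" for \<mu>
  proof -
    obtain m k where mk: "m > 0" "m < \<mu>" "k \<in> K" "x = m *\<^sub>R k"
      using gauge_less[OF assms(3,4), of x \<mu>] mg g_def by metis
    have "(m / \<mu>) *\<^sub>R k \<in> K" by (rule conv0) (use assms z mk in auto)
    moreover have "inverse \<mu> *\<^sub>R x = (m / \<mu>) *\<^sub>R k" using mk by (simp add: divide_inverse_commute)
    ultimately show ?thesis by simp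
  qed
  define f where "f n = inverse (g + inverse (real (Suc n))) *\<^sub>R x" for n
  have lim: "(\<lambda>n. g + inverse (real (Suc n))) \<longlonglongrightarrow> g"
    using tendsto_add[OF tendsto_const LIMSEQ_inverse_real_of_nat, of g] by simp
  have "\<And>n. f n \<in> K" unfolding f_def by (rule big) simp
  moreover have "f \<longlonglongrightarrow> inverse g *\<^sub>R x"
    unfolding f_def
    by (intro tendsto_intros lim) (use g in auto)
  ultimately have "inverse g *\<^sub>R x \<in> K" using closed_sequentially[OF assms(1)] by blast
  then show ?thesis using g_def by (simp add: divide_inverse)
qed


lemma core:
  fixes K :: "'a::euclidean_space set"
  assumes "convex K" "0 \<in> interior K" "u1 \<in> K" "u2 \<in> K" "n1 \<le> n2" "1 \<le> n1"
    "n2 \<le> l2 + \<epsilon>" "0 < \<mu>" "\<mu> < 1 - \<epsilon>" "z \<in> K" "u2 - u1 = \<mu> *\<^sub>R z"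
    "- v1 = n1 *\<^sub>R u1" "- v2 = n2 *\<^sub>R u2" "0 \<le> \<epsilon>"
  shows "v1 \<in> homothet v2 l2 (interior K)"
proof -
  define c where "c = n2 - n1 + n1 * \<mu>"
  have nm: "n1 * \<mu> > 0" using assms(6,8) by simp
  have c: "c > 0" unfolding c_def using nm assms(5) by linarith
  have cl: "c < l2"
  proof -
    have h0: "n1 * (1 - \<mu>) \<ge> 1 * (1 - \<mu>)" using assms(6,8,9,14) by (intro mult_right_mono) auto
    then have h: "n1 * (1 - \<mu>) \<ge> 1 - \<mu>" by simp
    have "c = n2 - n1 * (1 - \<mu>)" unfolding c_def by (simp add: right_diff_distrib)
    then show ?thesis using h assms(7,9) by linarith
  qed
  define k where "k = ((n2 - n1) / c) *\<^sub>R u2 + (n1 * \<mu> / c) *\<^sub>R z"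
  have "k \<in> K" unfolding k_def
  proof (rule convexD[OF assms(1) assms(4) assms(10)])
    show "0 \<le> (n2 - n1) / c" using c assms(5) by simp
    show "0 \<le> n1 * \<mu> / c" using c nm by simp
    have cc: "(n2 - n1) + n1 * \<mu> = c" unfolding c_def by simp
    have "(n2 - n1) / c + n1 * \<mu> / c = ((n2 - n1) + n1 * \<mu>) / c" by (rule add_divide_distrib[symmetric])
    also have "\<dots> = c / c" by (simp only: cc)
    finally show "(n2 - n1) / c + n1 * \<mu> / c = 1" using c by simp
  qed
  moreover have "v1 = v2 + c *\<^sub>R k"
  proof -
    have c0: "c \<noteq> 0" using c by simp
    have "c *\<^sub>R k = (c * ((n2 - n1) / c)) *\<^sub>R u2 + (c * (n1 * \<mu> / c)) *\<^sub>R z"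
      unfolding k_def by (simp only: scaleR_add_right scaleR_scaleR)
    also have "\<dots> = (n2 - n1) *\<^sub>R u2 + (n1 * \<mu>) *\<^sub>R z" using c0 by simp
    also have "\<dots> = (n2 - n1) *\<^sub>R u2 + n1 *\<^sub>R (u2 - u1)" using assms(11) by simp
    also have "\<dots> = n2 *\<^sub>R u2 - n1 *\<^sub>R u1" by (simp add: algebra_simps)
    also have "\<dots> = v1 - v2"
    proof -
      have "v1 = - (n1 *\<^sub>R u1)" "v2 = - (n2 *\<^sub>R u2)" using assms(12,13) by (metis minus_minus)+
      then show ?thesis by simp
    qed
    finally show ?thesis by simp
  qed
  ultimately show ?thesis using in_hom_int[OF assms(1,2), of k c l2 v2] c cl by simp
qed

lemma upper:
  fixes K :: "'a::euclidean_space set"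
  assumes "convex K" "l \<ge> 1" "\<epsilon> \<ge> 0"
    "homothet v l K \<inter> (\<lambda>x. (- \<epsilon>) *\<^sub>R x) ` K \<noteq> {}"
  shows "gauge_norm K (- v) \<le> l + \<epsilon>"
proof -
  obtain k k' where kk: "k \<in> K" "k' \<in> K" "v + l *\<^sub>R k = (- \<epsilon>) *\<^sub>R k'"
    using assms(4) unfolding homothet_def by auto
  have p: "l + \<epsilon> > 0" using assms by simp
  define w where "w = (l / (l + \<epsilon>)) *\<^sub>R k + (\<epsilon> / (l + \<epsilon>)) *\<^sub>R k'"
  have "w \<in> K" unfolding w_def
  proof (rule convexD[OF assms(1) kk(1,2)])
    show "0 \<le> l / (l + \<epsilon>)" "0 \<le> \<epsilon> / (l + \<epsilon>)" using p assms by auto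
    show "l / (l + \<epsilon>) + \<epsilon> / (l + \<epsilon>) = 1" using p by (simp add: add_divide_distrib[symmetric])
  qed
  moreover have "- v = (l + \<epsilon>) *\<^sub>R w"
  proof -
    have "(l + \<epsilon>) *\<^sub>R w = l *\<^sub>R k + \<epsilon> *\<^sub>R k'" unfolding w_def using p
      by (simp add: scaleR_add_right)
    also have "\<dots> = - v"
    proof -
      have "- v = l *\<^sub>R k - (v + l *\<^sub>R k)" by simp
      also have "\<dots> = l *\<^sub>R k - (- \<epsilon>) *\<^sub>R k'" by (simp only: kk(3))
      finally show ?thesis by simp
    qed
    finally show ?thesis by simp
  qed
  ultimately show ?thesis using gauge_le p by blast
qed

lemma lower:
  fixes K :: "'a::euclidean_space set"
  assumes "convex K" "0 \<in> interior K" "r > 0" "cball 0 r \<subseteq> K"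
    "0 \<notin> homothet v l (interior K)"
  shows "gauge_norm K (- v) \<ge> l"
proof (rule ccontr)
  assume "\<not> ?thesis"
  then obtain m k where mk: "m > 0" "m < l" "k \<in> K" "- v = m *\<^sub>R k"
    using gauge_less[OF assms(3,4), of "- v" l] by (metis not_le)
  have "v + m *\<^sub>R k \<in> homothet v l (interior K)"
    by (rule in_hom_int[OF assms(1,2) mk(3)]) (use mk in auto)
  moreover have "v + m *\<^sub>R k = 0" using mk(4) by (metis add.right_inverse)
  ultimately show False using assms(5) by simp
qed

theorem lemma21:
  fixes K :: "'a::euclidean_space set"
    and v1 v2 :: 'a and l1 l2 \<epsilon> :: real
  assumes "convex_body K" and "0 \<in> interior K"
    and "\<epsilon> \<ge> 0" and "l1 \<ge> 1" and "l2 \<ge> 1"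
    and "v1 \<notin> homothet v2 l2 (interior K)"
    and "v2 \<notin> homothet v1 l1 (interior K)"
    and "0 \<notin> homothet v1 l1 (interior K)"
    and "0 \<notin> homothet v2 l2 (interior K)"
    and "homothet v1 l1 K \<inter> (\<lambda>x. (- \<epsilon>) *\<^sub>R x) ` K \<noteq> {}"
    and "homothet v2 l2 K \<inter> (\<lambda>x. (- \<epsilon>) *\<^sub>R x) ` K \<noteq> {}"
  shows "gauge_norm (K \<inter> uminus ` K)
           ((1 / gauge_norm K (- v1)) *\<^sub>R (- v1) - (1 / gauge_norm K (- v2)) *\<^sub>R (- v2))
         \<ge> 1 - \<epsilon>"
proof -
  have cl: "closed K" and cv: "convex K"
    using assms(1) unfolding convex_body_def by (auto simp: compact_imp_closed)
  obtain r where r: "r > 0" "cball 0 r \<subseteq> K" using assms(2) mem_interior_cball by blast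
  have rs: "cball 0 r \<subseteq> K \<inter> uminus ` K"
  proof
    fix x :: 'a assume x: "x \<in> cball 0 r"
    then have "- x \<in> K" using r by (intro subsetD[OF r(2)]) auto
    then have "x \<in> uminus ` K" by (metis image_eqI minus_minus)
    then show "x \<in> K \<inter> uminus ` K" using x r by auto
  qed
  define n1 where "n1 = gauge_norm K (- v1)"
  define n2 where "n2 = gauge_norm K (- v2)"
  have n1l: "n1 \<ge> l1" unfolding n1_def by (rule lower[OF cv assms(2) r assms(8)])
  have n2l: "n2 \<ge> l2" unfolding n2_def by (rule lower[OF cv assms(2) r assms(9)])
  have n1u: "n1 \<le> l1 + \<epsilon>" unfolding n1_def by (rule upper[OF cv assms(4,3,10)])
  have n2u: "n2 \<le> l2 + \<epsilon>" unfolding n2_def by (rule upper[OF cv assms(5,3,11)])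
  define u1 where "u1 = (1 / n1) *\<^sub>R (- v1)"
  define u2 where "u2 = (1 / n2) *\<^sub>R (- v2)"
  have u1: "u1 \<in> K" unfolding u1_def n1_def
    by (rule gauge_point[OF cl cv r]) (use n1l assms(4) n1_def in auto)
  have u2: "u2 \<in> K" unfolding u2_def n2_def
    by (rule gauge_point[OF cl cv r]) (use n2l assms(5) n2_def in auto)
  have e1: "- v1 = n1 *\<^sub>R u1" unfolding u1_def using n1l assms(4) by simp
  have e2: "- v2 = n2 *\<^sub>R u2" unfolding u2_def using n2l assms(5) by simp
  show ?thesis
  proof (cases "1 - \<epsilon> \<le> 0")
    case True
    then show ?thesis by (rule order_trans[OF _ gauge_ge0[OF r(1) rs]])
  next
    case False
    show ?thesis
    proof (rule ccontr)
      assume "\<not> ?thesis"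
      then have "gauge_norm (K \<inter> uminus ` K) (u1 - u2) < 1 - \<epsilon>"
        unfolding u1_def u2_def n1_def n2_def by simp
      then obtain m y where my: "m > 0" "m < 1 - \<epsilon>" "y \<in> K \<inter> uminus ` K" "u1 - u2 = m *\<^sub>R y"
        using gauge_less[OF r(1) rs] by metis
      have y: "y \<in> K" "- y \<in> K" using my(3) by auto
      show False
      proof (cases "n1 \<le> n2")
        case True
        have "v1 \<in> homothet v2 l2 (interior K)"
          by (rule core[OF cv assms(2) u1 u2 True _ n2u my(1,2) y(2) _ e1 e2])
            (use n1l assms(3,4) my(4) in \<open>auto simp: algebra_simps\<close>)
        then show False using assms(6) by simp
      next
        case False
        have "v2 \<in> homothet v1 l1 (interior K)"
          by (rule core[OF cv assms(2) u2 u1 _ _ n1u my(1,2) y(1) _ e2 e1])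
            (use n2l assms(3,5) my(4) False in \<open>auto simp: algebra_simps\<close>)
        then show False using assms(7) by simp
      qed
    qed
  qed
qed

end
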